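(* Let $1\le p\le q\le\infty$ and let $E$ be a locally convex space in which every bounded sequence has a weakly Cauchy subsequence. Then $E$ has the $spGP_{(p,q)}$ property if and only if every weakly null sequence $(x_n)$ in $E$ whose range $\{x_n:n\in\omega\}$ is a $(p,q)$-limited set converges to $0$ in $E$ (i.e., the identity map of $E$ is $(p,q)$-limited $\infty$-convergent).
   Context: For $A\subseteq E$ and $\chi\in E'$, $\|\chi\|_A:=\sup\{|\chi(x)|:x\in A\cup\{0\}\}$. A sequence $(\chi_n)$ in $E'$ is weak$^*$ $p$-summable if $(\chi_n(x))_n\in\ell_p$ for every $x\in E$ (in $c_0$ if $p=\infty$). A nonempty $A\subseteq E$ is $(p,q)$-limited if for every weak$^*$ $p$-summable $(\chi_n)$ in $E'$, $(\|\chi_n\|_A)_n\in\ell_q$ if $q<\infty$ and $\|\chi_n\|_A\to0$ if $q=\infty$. $E$ has the $spGP_{(p,q)}$ property if every $(p,q)$-limited subset of $E$ is sequentially precompact (every sequence in it has a subsequence that is Cauchy in $E$). *)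

theory Defs
  imports "HOL-Analysis.Analysis"
begin

text \<open>A (Hausdorff, real) locally convex space is represented by a real vector space
  together with a separating family of seminorms P :: 'i => 'a => real generating its topology.\<close>

definition seminorm :: "('a::real_vector \<Rightarrow> real) \<Rightarrow> bool" where
  "seminorm q \<longleftrightarrow> (\<forall>x y. q (x + y) \<le> q x + q y) \<and> (\<forall>c x. q (c *\<^sub>R x) = \<bar>c\<bar> * q x)"

definition lcs :: "('i \<Rightarrow> 'a::real_vector \<Rightarrow> real) \<Rightarrow> bool" where
  "lcs P \<longleftrightarrow> (\<forall>i. seminorm (P i)) \<and> (\<forall>x. x \<noteq> 0 \<longrightarrow> (\<exists>i. P i x \<noteq> 0))"

text \<open>Topological dual E': linear functionals continuous for the seminorm topology.\<close>
definition dual :: "('i \<Rightarrow> 'a::real_vector \<Rightarrow> real) \<Rightarrow> ('a \<Rightarrow> real) set" where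
  "dual P = {f. linear f \<and> (\<exists>F C. finite F \<and> (\<forall>x. \<bar>f x\<bar> \<le> C * (\<Sum>i\<in>F. P i x)))}"

definition lcs_cauchy :: "('i \<Rightarrow> 'a::real_vector \<Rightarrow> real) \<Rightarrow> (nat \<Rightarrow> 'a) \<Rightarrow> bool" where
  "lcs_cauchy P x \<longleftrightarrow> (\<forall>i. \<forall>e>0. \<exists>N. \<forall>m\<ge>N. \<forall>n\<ge>N. P i (x m - x n) < e)"

definition lcs_null :: "('i \<Rightarrow> 'a::real_vector \<Rightarrow> real) \<Rightarrow> (nat \<Rightarrow> 'a) \<Rightarrow> bool" where
  "lcs_null P x \<longleftrightarrow> (\<forall>i. (\<lambda>n. P i (x n)) \<longlonglongrightarrow> 0)"

definition lcs_bounded_seq :: "('i \<Rightarrow> 'a::real_vector \<Rightarrow> real) \<Rightarrow> (nat \<Rightarrow> 'a) \<Rightarrow> bool" where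
  "lcs_bounded_seq P x \<longleftrightarrow> (\<forall>i. \<exists>C. \<forall>n. P i (x n) \<le> C)"

definition weakly_cauchy :: "('i \<Rightarrow> 'a::real_vector \<Rightarrow> real) \<Rightarrow> (nat \<Rightarrow> 'a) \<Rightarrow> bool" where
  "weakly_cauchy P x \<longleftrightarrow> (\<forall>f\<in>dual P. Cauchy (\<lambda>n. f (x n)))"

definition weakly_null :: "('i \<Rightarrow> 'a::real_vector \<Rightarrow> real) \<Rightarrow> (nat \<Rightarrow> 'a) \<Rightarrow> bool" where
  "weakly_null P x \<longleftrightarrow> (\<forall>f\<in>dual P. (\<lambda>n. f (x n)) \<longlonglongrightarrow> 0)"

text \<open>Membership in l_p for p < infinity, in c_0 for p = infinity.\<close>
definition in_lp :: "ereal \<Rightarrow> (nat \<Rightarrow> real) \<Rightarrow> bool" where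
  "in_lp p a \<longleftrightarrow> (if p = \<infinity> then a \<longlonglongrightarrow> 0 else summable (\<lambda>n. \<bar>a n\<bar> powr real_of_ereal p))"

definition weak_star_summable :: "('i \<Rightarrow> 'a::real_vector \<Rightarrow> real) \<Rightarrow> ereal \<Rightarrow> (nat \<Rightarrow> 'a \<Rightarrow> real) \<Rightarrow> bool" where
  "weak_star_summable P p chi \<longleftrightarrow> (\<forall>n. chi n \<in> dual P) \<and> (\<forall>x. in_lp p (\<lambda>n. chi n x))"

definition sup_on :: "'a set \<Rightarrow> ('a::real_vector \<Rightarrow> real) \<Rightarrow> ereal" where
  "sup_on A chi = (SUP x\<in>A \<union> {0}. ereal \<bar>chi x\<bar>)"

definition pq_limited :: "('i \<Rightarrow> 'a::real_vector \<Rightarrow> real) \<Rightarrow> ereal \<Rightarrow> ereal \<Rightarrow> 'a set \<Rightarrow> bool" where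
  "pq_limited P p q A \<longleftrightarrow> A \<noteq> {} \<and>
     (\<forall>chi. weak_star_summable P p chi \<longrightarrow>
        (\<forall>n. sup_on A (chi n) \<noteq> \<infinity>) \<and> in_lp q (\<lambda>n. real_of_ereal (sup_on A (chi n))))"

definition seq_precompact :: "('i \<Rightarrow> 'a::real_vector \<Rightarrow> real) \<Rightarrow> 'a set \<Rightarrow> bool" where
  "seq_precompact P A \<longleftrightarrow> (\<forall>x::nat \<Rightarrow> 'a. (\<forall>n. x n \<in> A) \<longrightarrow> (\<exists>r::nat \<Rightarrow> nat. strict_mono r \<and> lcs_cauchy P (x \<circ> r)))"

definition spGP :: "('i \<Rightarrow> 'a::real_vector \<Rightarrow> real) \<Rightarrow> ereal \<Rightarrow> ereal \<Rightarrow> bool" where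
  "spGP P p q \<longleftrightarrow> (\<forall>A. pq_limited P p q A \<longrightarrow> seq_precompact P A)"

end

theory Submission
  imports Defs
begin


lemma sn_0: "seminorm q \<Longrightarrow> q 0 = 0"
  unfolding seminorm_def by (metis abs_zero mult_zero_left scaleR_zero_left)
lemma sn_neg: "seminorm q \<Longrightarrow> q (- x) = q x"
  unfolding seminorm_def by (metis abs_minus_cancel abs_one mult_1 scaleR_minus1_left)
lemma sn_nonneg: "seminorm q \<Longrightarrow> q x \<ge> 0"
proof -
  assume s: "seminorm q"
  have "q (x + - x) \<le> q x + q (- x)" using s unfolding seminorm_def by blast
  then show ?thesis using sn_0[OF s] sn_neg[OF s, of x] by simp
qed
lemma sn_add: "seminorm q \<Longrightarrow> q (x + y) \<le> q x + q y"
  unfolding seminorm_def by blast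
lemma sn_scale: "seminorm q \<Longrightarrow> q (c *\<^sub>R x) = \<bar>c\<bar> * q x"
  unfolding seminorm_def by blast
lemma sn_diff: "seminorm q \<Longrightarrow> q (x - y) \<le> q x + q y"
  using sn_add[of q x "-y"] sn_neg[of q y] by simp

lemma HB:
  fixes q :: "'a::real_vector \<Rightarrow> real"
  assumes s: "seminorm q"
  shows "\<exists>f. linear f \<and> (\<forall>x. \<bar>f x\<bar> \<le> q x) \<and> f z = q z"
proof -
  define good where "good H \<longleftrightarrow> (\<forall>x a b. (x,a)\<in>H \<longrightarrow> (x,b)\<in>H \<longrightarrow> a=b) \<and>
     (\<forall>x a y b. (x,a)\<in>H \<longrightarrow> (y,b)\<in>H \<longrightarrow> (x+y,a+b)\<in>H) \<and>
     (\<forall>x a c. (x,a)\<in>H \<longrightarrow> (c *\<^sub>R x, c*a)\<in>H) \<and>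
     (\<forall>x a. (x,a)\<in>H \<longrightarrow> a \<le> q x) \<and> (z, q z) \<in> H" for H :: "('a \<times> real) set"
  have gfun: "\<And>x a b. good H \<Longrightarrow> (x,a)\<in>H \<Longrightarrow> (x,b)\<in>H \<Longrightarrow> a=b" for H unfolding good_def by blast
  have gadd: "\<And>x a y b. good H \<Longrightarrow> (x,a)\<in>H \<Longrightarrow> (y,b)\<in>H \<Longrightarrow> (x+y,a+b)\<in>H" for H unfolding good_def by blast
  have ghom: "\<And>x a c. good H \<Longrightarrow> (x,a)\<in>H \<Longrightarrow> (c *\<^sub>R x, c*a)\<in>H" for H unfolding good_def by blast
  have gdom: "\<And>x a. good H \<Longrightarrow> (x,a)\<in>H \<Longrightarrow> a \<le> q x" for H unfolding good_def by blast
  have gz: "good H \<Longrightarrow> (z, q z) \<in> H" for H unfolding good_def by blast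
  define A where "A = {H. good H}"
  define H0 where "H0 = {(t *\<^sub>R z, t * q z) | t. True}"
  have gH0: "good H0"
    unfolding good_def H0_def
  proof (intro conjI allI impI)
    fix x a b assume "(x, a) \<in> {(t *\<^sub>R z, t * q z) |t. True}" "(x, b) \<in> {(t *\<^sub>R z, t * q z) |t. True}"
    then obtain t1 t2 where e: "x = t1 *\<^sub>R z" "a = t1 * q z" "x = t2 *\<^sub>R z" "b = t2 * q z" by blast
    show "a = b"
    proof (cases "z = 0")
      case True then show ?thesis using sn_0[OF s] e by simp
    next
      case False
      have "t1 *\<^sub>R z = t2 *\<^sub>R z" using trans[OF sym[OF e(1)] e(3)] .
      then have "t1 = t2" using False by (metis scaleR_cancel_right)
      then show ?thesis using e by simp
    qed
  next
    fix x a y b assume "(x, a) \<in> {(t *\<^sub>R z, t * q z) |t. True}" "(y, b) \<in> {(t *\<^sub>R z, t * q z) |t. True}"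
    then obtain t1 t2 where "x = t1 *\<^sub>R z" "a = t1 * q z" "y = t2 *\<^sub>R z" "b = t2 * q z" by auto
    then show "(x + y, a + b) \<in> {(t *\<^sub>R z, t * q z) |t. True}"
      by (auto intro!: exI[of _ "t1+t2"] simp: algebra_simps)
  next
    fix x a c assume "(x, a) \<in> {(t *\<^sub>R z, t * q z) |t. True}"
    then obtain t1 where "x = t1 *\<^sub>R z" "a = t1 * q z" by auto
    then show "(c *\<^sub>R x, c * a) \<in> {(t *\<^sub>R z, t * q z) |t. True}"
      by (auto intro!: exI[of _ "c*t1"] simp: algebra_simps)
  next
    fix x a assume "(x, a) \<in> {(t *\<^sub>R z, t * q z) |t. True}"
    then obtain t1 where "x = t1 *\<^sub>R z" "a = t1 * q z" by auto
    then show "a \<le> q x" using sn_scale[OF s, of t1 z] sn_nonneg[OF s, of z]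
      by (simp add: mult_right_mono)
  next
    show "(z, q z) \<in> {(t *\<^sub>R z, t * q z) |t. True}" by (auto intro!: exI[of _ 1])
  qed
  have "\<forall>C\<in>chains A. \<exists>U\<in>A. \<forall>X\<in>C. X \<subseteq> U"
  proof
    fix C assume C: "C \<in> chains A"
    show "\<exists>U\<in>A. \<forall>X\<in>C. X \<subseteq> U"
    proof (cases "C = {}")
      case True then show ?thesis using gH0 A_def by auto
    next
      case False
      have CA: "\<And>X. X \<in> C \<Longrightarrow> good X" using chainsD2[OF C] A_def by auto
      have ch: "\<And>X Y. X \<in> C \<Longrightarrow> Y \<in> C \<Longrightarrow> X \<subseteq> Y \<or> Y \<subseteq> X" using chainsD[OF C] by blast
      have "good (\<Union>C)"
        unfolding good_def
      proof (intro conjI allI impI)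
        fix x a b assume "(x, a) \<in> \<Union> C" "(x, b) \<in> \<Union> C"
        then obtain X Y where XY: "X \<in> C" "Y \<in> C" "(x,a) \<in> X" "(x,b) \<in> Y" by auto
        show "a = b"
        proof (cases "X \<subseteq> Y")
          case True then show ?thesis using XY gfun[OF CA[of Y]] by blast
        next
          case False then have "Y \<subseteq> X" using ch XY by blast
          then show ?thesis using XY gfun[OF CA[of X]] by blast
        qed
      next
        fix x a y b assume "(x, a) \<in> \<Union> C" "(y, b) \<in> \<Union> C"
        then obtain X Y where XY: "X \<in> C" "Y \<in> C" "(x,a) \<in> X" "(y,b) \<in> Y" by auto
        show "(x + y, a + b) \<in> \<Union> C"
        proof (cases "X \<subseteq> Y")
          case True then show ?thesis using XY gadd[OF CA[of Y]] by blast
        next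
          case False then have "Y \<subseteq> X" using ch XY by blast
          then show ?thesis using XY gadd[OF CA[of X]] by blast
        qed
      next
        fix x a c assume "(x, a) \<in> \<Union> C"
        then obtain X where "X \<in> C" "(x,a) \<in> X" by auto
        then show "(c *\<^sub>R x, c * a) \<in> \<Union> C" using ghom[OF CA[of X]] by blast
      next
        fix x a assume "(x, a) \<in> \<Union> C"
        then obtain X where "X \<in> C" "(x,a) \<in> X" by auto
        then show "a \<le> q x" using gdom[OF CA[of X]] by blast
      next
        obtain X where "X \<in> C" using False by blast
        then show "(z, q z) \<in> \<Union> C" using gz[OF CA[of X]] by blast
      qed
      then show ?thesis using A_def by auto
    qed
  qed
  from Zorn_Lemma2[OF this] obtain M where MA: "M \<in> A" and Mmax: "\<forall>X\<in>A. M \<subseteq> X \<longrightarrow> X = M" by blast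
  have gM: "good M" using MA A_def by auto
  have fu: "\<And>x a b. (x,a)\<in>M \<Longrightarrow> (x,b)\<in>M \<Longrightarrow> a=b" using gfun[OF gM] .
  have add: "\<And>x a y b. (x,a)\<in>M \<Longrightarrow> (y,b)\<in>M \<Longrightarrow> (x+y,a+b)\<in>M" using gadd[OF gM] .
  have hom: "\<And>x a c. (x,a)\<in>M \<Longrightarrow> (c *\<^sub>R x, c*a)\<in>M" using ghom[OF gM] .
  have dom: "\<And>x a. (x,a)\<in>M \<Longrightarrow> a \<le> q x" using gdom[OF gM] .
  have zM: "(z, q z) \<in> M" using gz[OF gM] .
  have zero: "(0,0) \<in> M" using hom[OF zM, of 0] by simp
  have total: "\<exists>a. (w,a) \<in> M" for w
  proof (rule ccontr)
    assume nw: "\<not> (\<exists>a. (w,a) \<in> M)"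
    define S where "S = {g - q (s - w) | s g. (s,g) \<in> M}"
    define c where "c = Sup S"
    have Sne: "S \<noteq> {}" using zero S_def by auto
    have Sbd: "bdd_above S"
    proof (rule bdd_aboveI[of _ "q w"])
      fix v assume "v \<in> S"
      then obtain s g where v: "v = g - q (s - w)" "(s,g) \<in> M" using S_def by auto
      have "q s \<le> q (s - w) + q w" using sn_add[OF s, of "s - w" w] by simp
      then show "v \<le> q w" using dom[OF v(2)] v(1) by simp
    qed
    have c_ge: "g - q (s - w) \<le> c" if "(s,g) \<in> M" for s g
    proof -
      have "g - q (s - w) \<in> S" using that S_def by auto
      then show ?thesis unfolding c_def using cSup_upper[OF _ Sbd] by blast
    qed
    have c_le: "c \<le> q (s + w) - g" if sg: "(s,g) \<in> M" for s g
      unfolding c_def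
    proof (rule cSup_least[OF Sne])
      fix v assume "v \<in> S"
      then obtain s' g' where v: "v = g' - q (s' - w)" "(s',g') \<in> M" using S_def by auto
      have "g + g' \<le> q (s + s')" using dom[OF add[OF sg v(2)]] .
      also have "\<dots> \<le> q (s + w) + q (s' - w)" using sn_add[OF s, of "s + w" "s' - w"] by (simp add: algebra_simps)
      finally show "v \<le> q (s + w) - g" using v(1) by simp
    qed
    define M' where "M' = {(s + t *\<^sub>R w, g + t * c) | s g t. (s,g) \<in> M}"
    have gM': "good M'"
      unfolding good_def
    proof (intro conjI allI impI)
      fix x a b assume "(x, a) \<in> M'" "(x, b) \<in> M'"
      then obtain s1 g1 t1 s2 g2 t2 where e: "x = s1 + t1 *\<^sub>R w" "a = g1 + t1 * c" "(s1,g1)\<in>M"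
        "x = s2 + t2 *\<^sub>R w" "b = g2 + t2 * c" "(s2,g2)\<in>M" unfolding M'_def by blast
      have d: "(s2 - s1, g2 - g1) \<in> M" using add[OF e(6) hom[OF e(3), of "-1"]] by simp
      have "t1 = t2"
      proof (rule ccontr)
        assume ne: "t1 \<noteq> t2"
        have "(t1 - t2) *\<^sub>R w = s2 - s1" using e by (simp add: algebra_simps)
        moreover have "w = (1/(t1-t2)) *\<^sub>R ((t1 - t2) *\<^sub>R w)" using ne by simp
        ultimately have "w = (1/(t1-t2)) *\<^sub>R (s2 - s1)" by simp
        then have "(w, (1/(t1-t2)) * (g2 - g1)) \<in> M" using hom[OF d, of "1/(t1-t2)"] by simp
        then show False using nw by blast
      qed
      then have "s1 = s2" using e by simp
      then have "g1 = g2" using fu e by blast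
      then show "a = b" using e \<open>t1 = t2\<close> by simp
    next
      fix x a y b assume "(x, a) \<in> M'" "(y, b) \<in> M'"
      then obtain s1 g1 t1 s2 g2 t2 where e: "x = s1 + t1 *\<^sub>R w" "a = g1 + t1 * c" "(s1,g1)\<in>M"
        "y = s2 + t2 *\<^sub>R w" "b = g2 + t2 * c" "(s2,g2)\<in>M" unfolding M'_def by blast
      have "(x + y, a + b) = ((s1 + s2) + (t1 + t2) *\<^sub>R w, (g1 + g2) + (t1+t2) * c)"
        using e by (simp add: algebra_simps)
      then show "(x + y, a + b) \<in> M'" unfolding M'_def using add[OF e(3) e(6)] by blast
    next
      fix x a c' assume "(x, a) \<in> M'"
      then obtain s1 g1 t1 where e: "x = s1 + t1 *\<^sub>R w" "a = g1 + t1 * c" "(s1,g1)\<in>M"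
        unfolding M'_def by blast
      have "(c' *\<^sub>R x, c' * a) = (c' *\<^sub>R s1 + (c' * t1) *\<^sub>R w, c' * g1 + (c' * t1) * c)"
        using e by (simp add: algebra_simps)
      then show "(c' *\<^sub>R x, c' * a) \<in> M'" unfolding M'_def using hom[OF e(3)] by blast
    next
      fix x a assume "(x, a) \<in> M'"
      then obtain s1 g1 t where e: "x = s1 + t *\<^sub>R w" "a = g1 + t * c" "(s1,g1)\<in>M"
        unfolding M'_def by blast
      consider "t > 0" | "t = 0" | "t < 0" by linarith
      then show "a \<le> q x"
      proof cases
        case 1
        have m: "((1/t) *\<^sub>R s1, (1/t) * g1) \<in> M" using hom[OF e(3)] .
        have "c \<le> q ((1/t) *\<^sub>R s1 + w) - (1/t) * g1" using c_le[OF m] .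
        then have "t * c \<le> t * (q ((1/t) *\<^sub>R s1 + w) - (1/t) * g1)" using 1
          by (intro mult_left_mono) auto
        then have "t * c \<le> t * q ((1/t) *\<^sub>R s1 + w) - g1" using 1
          by (simp add: right_diff_distrib)
        moreover have "t * q ((1/t) *\<^sub>R s1 + w) = q (s1 + t *\<^sub>R w)"
        proof -
          have "s1 + t *\<^sub>R w = t *\<^sub>R ((1/t) *\<^sub>R s1 + w)" using 1 by (simp add: algebra_simps)
          then show ?thesis using sn_scale[OF s, of t] 1 by simp
        qed
        ultimately show ?thesis using e by simp
      next
        case 2 then show ?thesis using e dom by simp
      next
        case 3
        define u where "u = - t"
        have u: "u > 0" using 3 u_def by simp
        have m: "((1/u) *\<^sub>R s1, (1/u) * g1) \<in> M" using hom[OF e(3)] .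
        have "(1/u) * g1 - q ((1/u) *\<^sub>R s1 - w) \<le> c" using c_ge[OF m] .
        then have "u * ((1/u) * g1 - q ((1/u) *\<^sub>R s1 - w)) \<le> u * c" using u
          by (intro mult_left_mono) auto
        then have "g1 - u * q ((1/u) *\<^sub>R s1 - w) \<le> u * c" using u
          by (simp add: right_diff_distrib)
        moreover have "u * q ((1/u) *\<^sub>R s1 - w) = q (s1 + t *\<^sub>R w)"
        proof -
          have "s1 + t *\<^sub>R w = u *\<^sub>R ((1/u) *\<^sub>R s1 - w)" using u u_def by (simp add: algebra_simps)
          then show ?thesis using sn_scale[OF s, of u] u by simp
        qed
        ultimately show ?thesis using e u_def by simp
      qed
    next
      show "(z, q z) \<in> M'" unfolding M'_def using zM by force
    qed
    have sub: "M \<subseteq> M'" unfolding M'_def by force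
    have "M' = M" using Mmax gM' sub A_def by auto
    moreover have "(w, c) \<in> M'" unfolding M'_def using zero by force
    ultimately show False using nw by blast
  qed
  define f where "f x = (THE a. (x,a) \<in> M)" for x
  have fM: "(x, f x) \<in> M" for x
  proof -
    obtain a where a: "(x,a) \<in> M" using total by blast
    then have "f x = a" unfolding f_def using fu by blast
    then show ?thesis using a by simp
  qed
  have fI: "(x,a) \<in> M \<Longrightarrow> f x = a" for x a using fM fu by blast
  have lin: "linear f"
    unfolding linear_iff using fI[OF add[OF fM fM]] fI[OF hom[OF fM]] by simp
  have "\<bar>f x\<bar> \<le> q x" for x
  proof -
    have "f x \<le> q x" using dom[OF fM] .
    moreover have "- f x \<le> q x" using dom[OF hom[OF fM, of "-1" x]] sn_neg[OF s, of x] by simp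
    ultimately show ?thesis by simp
  qed
  moreover have "f z = q z" using fI[OF zM] .
  ultimately show ?thesis using lin by blast
qed



lemma lcs_sn: "lcs P \<Longrightarrow> seminorm (P i)" unfolding lcs_def by blast

lemma dual_HB:
  assumes "lcs P"
  shows "\<exists>f\<in>dual P. (\<forall>x. \<bar>f x\<bar> \<le> P i x) \<and> f z = P i z"
proof -
  obtain f where f: "linear f" "\<forall>x. \<bar>f x\<bar> \<le> P i x" "f z = P i z"
    using HB[OF lcs_sn[OF assms], of i z] by blast
  have "f \<in> dual P" unfolding dual_def
    using f by (auto intro!: exI[of _ "{i}"] exI[of _ 1])
  then show ?thesis using f by blast
qed

lemma cauchy_wnull_null:
  assumes l: "lcs P" and c: "lcs_cauchy P y" and w: "weakly_null P y"
  shows "lcs_null P y"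
  unfolding lcs_null_def
proof (intro allI LIMSEQ_I)
  fix i and r :: real assume r: "0 < r"
  obtain N where N: "\<forall>m\<ge>N. \<forall>n\<ge>N. P i (y m - y n) < r/2"
  proof -
    have "r/2 > 0" using r by simp
    then show ?thesis using c that unfolding lcs_cauchy_def by blast
  qed
  have "norm (P i (y m) - 0) < r" if m: "m \<ge> N" for m
  proof -
    obtain f where f: "f \<in> dual P" "\<forall>x. \<bar>f x\<bar> \<le> P i x" "f (y m) = P i (y m)"
      using dual_HB[OF l] by blast
    have lin: "linear f" using f(1) unfolding dual_def by blast
    have t: "(\<lambda>n. f (y n)) \<longlonglongrightarrow> 0" using w f(1) unfolding weakly_null_def by blast
    have lim: "(\<lambda>n. r/2 + f (y n)) \<longlonglongrightarrow> r/2 + 0" by (intro tendsto_intros t)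
    have ex: "\<exists>N'. \<forall>n\<ge>N'. f (y m) \<le> r/2 + f (y n)"
    proof (intro exI allI impI)
      fix n assume "n \<ge> N"
      then have "P i (y m - y n) < r/2" using N m by blast
      moreover have "\<bar>f (y m - y n)\<bar> \<le> P i (y m - y n)" using f(2) by blast
      ultimately have "\<bar>f (y m - y n)\<bar> < r/2" by linarith
      then show "f (y m) \<le> r/2 + f (y n)" using linear_diff[OF lin, of "y m" "y n"] by linarith
    qed
    have "f (y m) \<le> r/2 + 0" using LIMSEQ_le_const[OF lim ex] .
    then have "f (y m) \<le> r/2" by simp
    then show ?thesis using f(3) sn_nonneg[OF lcs_sn[OF l]] r by simp
  qed
  then show "\<exists>no. \<forall>n\<ge>no. norm (P i (y n) - 0) < r" by blast
qed

lemma not_null_subseq: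
  fixes g :: "nat \<Rightarrow> real"
  assumes "\<not> g \<longlonglongrightarrow> 0"
  shows "\<exists>e>0. \<exists>r::nat\<Rightarrow>nat. strict_mono r \<and> (\<forall>k. e \<le> \<bar>g (r k)\<bar>)"
proof -
  have "\<not> (\<forall>r>0. \<exists>no. \<forall>n\<ge>no. norm (g n - 0) < r)" using assms LIMSEQ_iff by blast
  then obtain e where e0: "e > 0" and e1: "\<forall>no. \<exists>n\<ge>no. \<not> norm (g n - 0) < e" by blast
  have "infinite {n. e \<le> \<bar>g n\<bar>}"
    unfolding infinite_nat_iff_unbounded_le
  proof
    fix m
    obtain n where "n \<ge> m" "\<not> norm (g n - 0) < e" using e1 by blast
    then show "\<exists>n\<ge>m. n \<in> {n. e \<le> \<bar>g n\<bar>}" by auto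
  qed
  from infinite_enumerate[OF this] obtain r :: "nat \<Rightarrow> nat" where "strict_mono r" "\<forall>n. r n \<in> {n. e \<le> \<bar>g n\<bar>}"
    by blast
  then show ?thesis using e0 by blast
qed

lemma in_lp_mono:
  assumes q: "1 \<le> q" and ab: "\<And>n. 0 \<le> a n \<and> a n \<le> b n" and b: "in_lp q b"
  shows "in_lp q a"
proof (cases "q = \<infinity>")
  case True
  then have "b \<longlonglongrightarrow> 0" using b unfolding in_lp_def by simp
  moreover have "eventually (\<lambda>n. 0 \<le> a n) sequentially" "eventually (\<lambda>n. a n \<le> b n) sequentially"
    using ab by auto
  ultimately have "a \<longlonglongrightarrow> 0" using tendsto_sandwich[of "\<lambda>_. 0" a sequentially b 0] by blast
  then show ?thesis using True unfolding in_lp_def by simp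
next
  case False
  have "q \<noteq> - \<infinity>" using q by auto
  then obtain rq where rq: "q = ereal rq" using False by (cases q) auto
  have r: "rq \<ge> 0" using q rq by simp
  have "summable (\<lambda>n. \<bar>b n\<bar> powr rq)" using b False rq unfolding in_lp_def by simp
  moreover have "norm (\<bar>a n\<bar> powr rq) \<le> \<bar>b n\<bar> powr rq" for n
  proof -
    have "\<bar>a n\<bar> \<le> \<bar>b n\<bar>" using ab[of n] by simp
    then have "\<bar>a n\<bar> powr rq \<le> \<bar>b n\<bar> powr rq" using r by (intro powr_mono2) auto
    then show ?thesis by simp
  qed
  ultimately have "summable (\<lambda>n. \<bar>a n\<bar> powr rq)"
    using summable_comparison_test[where g="\<lambda>n. \<bar>b n\<bar> powr rq" and f="\<lambda>n. \<bar>a n\<bar> powr rq"] by blast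
  then show ?thesis using False rq unfolding in_lp_def by simp
qed

lemma sup_on_ge: "x \<in> A \<union> {0} \<Longrightarrow> ereal \<bar>f x\<bar> \<le> sup_on A f"
  unfolding sup_on_def by (rule SUP_upper)

lemma sup_on_nonneg: "0 \<le> sup_on A f"
  by (rule order_trans[OF _ sup_on_ge[of 0]]) auto

lemma pq_limited_dom:
  assumes A: "pq_limited P p q A" and q: "1 \<le> q" and B: "B \<noteq> {}"
    and dom: "\<forall>f\<in>dual P. \<forall>b\<in>B. ereal \<bar>f b\<bar> \<le> sup_on A f"
  shows "pq_limited P p q B"
  unfolding pq_limited_def
proof (rule conjI[OF B], intro allI impI)
  fix chi assume chi: "weak_star_summable P p chi"
  have fin: "\<forall>n. sup_on A (chi n) \<noteq> \<infinity>" and lp: "in_lp q (\<lambda>n. real_of_ereal (sup_on A (chi n)))"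
    using A chi unfolding pq_limited_def by blast+
  have cd: "chi n \<in> dual P" for n using chi unfolding weak_star_summable_def by blast
  have le: "sup_on B (chi n) \<le> sup_on A (chi n)" for n
    unfolding sup_on_def[of B]
  proof (rule SUP_least)
    fix x assume "x \<in> B \<union> {0}"
    then show "ereal \<bar>chi n x\<bar> \<le> sup_on A (chi n)"
      using dom cd[of n] sup_on_ge[of 0 A "chi n"] by auto
  qed
  have F: "\<forall>n. sup_on B (chi n) \<noteq> \<infinity>"
  proof
    fix n
    have "sup_on B (chi n) \<le> sup_on A (chi n)" "sup_on A (chi n) \<noteq> \<infinity>" using le fin by auto
    then show "sup_on B (chi n) \<noteq> \<infinity>" by (cases "sup_on A (chi n)") auto
  qed
  have L: "in_lp q (\<lambda>n. real_of_ereal (sup_on B (chi n)))"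
    by (rule in_lp_mono[OF q _ lp]) (simp add: real_of_ereal_pos sup_on_nonneg real_of_ereal_positive_mono le fin)
  show "(\<forall>n. sup_on B (chi n) \<noteq> \<infinity>) \<and> in_lp q (\<lambda>n. real_of_ereal (sup_on B (chi n)))"
    using F L by blast
qed

lemma zero_dual: "(\<lambda>_. 0) \<in> dual P"
  unfolding dual_def by (auto intro!: exI[of _ "{}"] exI[of _ 0] linear_zero)

lemma sup_on_fin:
  assumes A: "pq_limited P p q A" and f: "f \<in> dual P"
  shows "sup_on A f \<noteq> \<infinity>"
proof -
  define chi where "chi n = (if n = 0 then f else (\<lambda>_. 0))" for n :: nat
  have ws: "weak_star_summable P p chi"
    unfolding weak_star_summable_def
  proof (intro conjI allI)
    fix n show "chi n \<in> dual P" using f zero_dual[of P] chi_def by simp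
  next
    fix x
    show "in_lp p (\<lambda>n. chi n x)"
    proof (cases "p = \<infinity>")
      case True
      have "(\<lambda>n. chi (Suc n) x) \<longlonglongrightarrow> 0" by (simp add: chi_def)
      then have "(\<lambda>n. chi n x) \<longlonglongrightarrow> 0" by (rule LIMSEQ_imp_Suc)
      then show ?thesis using True unfolding in_lp_def by simp
    next
      case False
      have "summable (\<lambda>n. \<bar>chi n x\<bar> powr real_of_ereal p)"
        by (rule summable_finite[of "{0}"]) (auto simp: chi_def)
      then show ?thesis using False unfolding in_lp_def by simp
    qed
  qed
  have "sup_on A (chi 0) \<noteq> \<infinity>" using A ws unfolding pq_limited_def by blast
  then show ?thesis by (simp add: chi_def)
qed

lemma ereal_le_real: "S \<noteq> \<infinity> \<Longrightarrow> ereal a \<le> S \<Longrightarrow> a \<le> real_of_ereal S"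
  by (cases S) auto



lemma dual_lin: "f \<in> dual P \<Longrightarrow> linear f" unfolding dual_def by blast

lemma ereal_avg: "ereal u \<le> S \<Longrightarrow> ereal v \<le> S \<Longrightarrow> w \<le> (u+v)/2 \<Longrightarrow> ereal w \<le> S"
  by (cases S) auto

theorem theoremt:
  fixes P :: "'i \<Rightarrow> 'a::real_vector \<Rightarrow> real" and p q :: ereal
  assumes "lcs P"
    and "1 \<le> p" and "p \<le> q"
    and "\<forall>x. lcs_bounded_seq P x \<longrightarrow> (\<exists>r. strict_mono r \<and> weakly_cauchy P (x \<circ> r))"
  shows "spGP P p q \<longleftrightarrow>
    (\<forall>x. weakly_null P x \<and> pq_limited P p q (range x) \<longrightarrow> lcs_null P x)"
proof
  assume sp: "spGP P p q"
  show "\<forall>x. weakly_null P x \<and> pq_limited P p q (range x) \<longrightarrow> lcs_null P x"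
  proof (intro allI impI)
    fix x assume h: "weakly_null P x \<and> pq_limited P p q (range x)"
    show "lcs_null P x" unfolding lcs_null_def
    proof
      fix i show "(\<lambda>n. P i (x n)) \<longlonglongrightarrow> 0"
      proof (rule ccontr)
        assume nn: "\<not> (\<lambda>n. P i (x n)) \<longlonglongrightarrow> 0"
        obtain e and r :: "nat \<Rightarrow> nat" where e: "e > 0" "strict_mono r" "\<forall>k. e \<le> \<bar>P i (x (r k))\<bar>"
          using not_null_subseq[OF nn] by blast
        have "seq_precompact P (range x)" using sp h unfolding spGP_def by blast
        moreover have "\<forall>n. (x \<circ> r) n \<in> range x" by simp
        ultimately obtain s :: "nat \<Rightarrow> nat" where s: "strict_mono s" "lcs_cauchy P ((x \<circ> r) \<circ> s)"
          unfolding seq_precompact_def by blast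
        define y where "y = (x \<circ> r) \<circ> s"
        have rs: "strict_mono (r \<circ> s)" using strict_mono_o[OF e(2) s(1)] .
        have "weakly_null P y" unfolding weakly_null_def
        proof
          fix f assume f: "f \<in> dual P"
          have "(\<lambda>n. f (x n)) \<longlonglongrightarrow> 0" using h f unfolding weakly_null_def by blast
          from LIMSEQ_subseq_LIMSEQ[OF this rs] show "(\<lambda>n. f (y n)) \<longlonglongrightarrow> 0"
            by (simp add: y_def comp_def)
        qed
        then have "lcs_null P y" using cauchy_wnull_null[OF assms(1)] s(2) y_def by blast
        then have "(\<lambda>n. P i (y n)) \<longlonglongrightarrow> 0" unfolding lcs_null_def by blast
        from LIMSEQ_D[OF this e(1)] obtain n0 where "\<forall>n\<ge>n0. norm (P i (y n) - 0) < e" by blast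
        then have "\<bar>P i (y n0)\<bar> < e" by simp
        moreover have "e \<le> \<bar>P i (y n0)\<bar>" using e(3) y_def by simp
        ultimately show False by simp
      qed
    qed
  qed
next
  assume H: "\<forall>x. weakly_null P x \<and> pq_limited P p q (range x) \<longrightarrow> lcs_null P x"
  have q1: "1 \<le> q" using assms(2,3) by (rule order_trans)
  have sn: "seminorm (P i)" for i using lcs_sn[OF assms(1)] .
  show "spGP P p q" unfolding spGP_def
  proof (intro allI impI)
    fix A assume pl: "pq_limited P p q A"
    show "seq_precompact P A" unfolding seq_precompact_def
    proof (intro allI impI)
      fix x :: "nat \<Rightarrow> 'a" assume xA: "\<forall>n. x n \<in> A"
      have supA: "ereal \<bar>f v\<bar> \<le> sup_on A f" if "v \<in> A" for f v
        using sup_on_ge[of v A f] that by simp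
      have wb: "\<bar>f (x n)\<bar> \<le> real_of_ereal (sup_on A f)" if f: "f \<in> dual P" for f n
        using ereal_le_real[OF sup_on_fin[OF pl f] supA[OF xA[rule_format]]] .
      have bnd: "lcs_bounded_seq P x"
        unfolding lcs_bounded_seq_def
      proof
        fix i show "\<exists>C. \<forall>n. P i (x n) \<le> C"
        proof (rule ccontr)
          assume nb: "\<not> (\<exists>C. \<forall>n. P i (x n) \<le> C)"
          have ex: "\<exists>n. P i (x n) > (real (Suc k))^2" for k
          proof -
            have "\<not> (\<forall>n. P i (x n) \<le> (real (Suc k))^2)" using nb by blast
            then show ?thesis by (auto simp: not_le)
          qed
          define nk where "nk k = (SOME n. P i (x n) > (real (Suc k))^2)" for k
          have nk: "P i (x (nk k)) > (real (Suc k))^2" for k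
            unfolding nk_def using someI_ex[OF ex[of k]] .
          define z where "z k = (1/real (Suc k)) *\<^sub>R x (nk k)" for k
          have fz: "f (z k) = (1/real (Suc k)) * f (x (nk k))" if "f \<in> dual P" for f k
            using linear_scale[OF dual_lin[OF that]] z_def by simp
          have pz: "pq_limited P p q (range z)"
          proof (rule pq_limited_dom[OF pl q1])
            show "range z \<noteq> {}" by simp
            show "\<forall>f\<in>dual P. \<forall>b\<in>range z. ereal \<bar>f b\<bar> \<le> sup_on A f"
            proof (intro ballI)
              fix f b assume f: "f \<in> dual P" and b: "b \<in> range z"
              then obtain k where k: "b = z k" by blast
              have "\<bar>f b\<bar> = (1/real (Suc k)) * \<bar>f (x (nk k))\<bar>" using fz[OF f] k by (simp add: abs_mult)
              also have "\<dots> \<le> \<bar>f (x (nk k))\<bar>" by (rule mult_left_le_one_le) auto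
              finally have "ereal \<bar>f b\<bar> \<le> ereal \<bar>f (x (nk k))\<bar>" by simp
              also have "\<dots> \<le> sup_on A f" using supA xA by blast
              finally show "ereal \<bar>f b\<bar> \<le> sup_on A f" .
            qed
          qed
          have wz: "weakly_null P z" unfolding weakly_null_def
          proof
            fix f assume f: "f \<in> dual P"
            define B where "B = real_of_ereal (sup_on A f)"
            have lim: "(\<lambda>n. B / real (Suc n)) \<longlonglongrightarrow> 0" using LIMSEQ_Suc[OF lim_const_over_n[of B]] by simp
            have ev: "eventually (\<lambda>k. norm (f (z k)) \<le> B / real (Suc k)) sequentially"
            proof (intro always_eventually allI)
              fix k
              have "norm (f (z k)) = \<bar>f (x (nk k))\<bar> / real (Suc k)" using fz[OF f] by (simp add: abs_mult)
              also have "\<dots> \<le> B / real (Suc k)" using wb[OF f] B_def by (simp add: divide_right_mono)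
              finally show "norm (f (z k)) \<le> B / real (Suc k)" .
            qed
            show "(\<lambda>k. f (z k)) \<longlonglongrightarrow> 0" using Lim_null_comparison[OF ev lim] .
          qed
          have "lcs_null P z" using H wz pz by blast
          then have "(\<lambda>k. P i (z k)) \<longlonglongrightarrow> 0" unfolding lcs_null_def by blast
          from LIMSEQ_D[OF this, of 1] obtain n0 where "\<forall>n\<ge>n0. norm (P i (z n) - 0) < 1" by auto
          then have lt: "\<bar>P i (z n0)\<bar> < 1" by simp
          have e1: "P i (z n0) = P i (x (nk n0)) / real (Suc n0)"
            using sn_scale[OF sn[of i], of "1/real (Suc n0)" "x (nk n0)"] z_def by simp
          have e2: "P i (x (nk n0)) / real (Suc n0) > real (Suc n0)"
            using nk[of n0] by (simp add: field_simps power2_eq_square)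
          have e3: "real (Suc n0) \<ge> 1" by simp
          have "P i (z n0) > 1" using e1 e2 e3 by linarith
          then show False using lt by linarith
        qed
      qed
      obtain r where r: "strict_mono r" "weakly_cauchy P (x \<circ> r)" using assms(4) bnd by blast
      have "lcs_cauchy P (x \<circ> r)"
      proof (rule ccontr)
        define y where "y = x \<circ> r"
        assume "\<not> lcs_cauchy P (x \<circ> r)"
        then obtain i e where e: "e > 0" "\<forall>N. \<exists>m\<ge>N. \<exists>n\<ge>N. \<not> P i (y m - y n) < e"
          unfolding lcs_cauchy_def y_def by blast
        have "\<forall>N. \<exists>mn. fst mn \<ge> N \<and> snd mn \<ge> N \<and> e \<le> P i (y (fst mn) - y (snd mn))"
        proof
          fix N obtain m n where "m \<ge> N" "n \<ge> N" "\<not> P i (y m - y n) < e" using e(2) by blast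
          then show "\<exists>mn. fst mn \<ge> N \<and> snd mn \<ge> N \<and> e \<le> P i (y (fst mn) - y (snd mn))"
            by (intro exI[of _ "(m,n)"]) auto
        qed
        from choice[OF this] obtain c where c: "\<forall>N. fst (c N) \<ge> N \<and> snd (c N) \<ge> N \<and> e \<le> P i (y (fst (c N)) - y (snd (c N)))"
          by blast
        define z where "z k = (1/2) *\<^sub>R (y (fst (c k)) - y (snd (c k)))" for k
        have fz: "f (z k) = (f (y (fst (c k))) - f (y (snd (c k)))) / 2" if "f \<in> dual P" for f k
          using linear_scale[OF dual_lin[OF that]] linear_diff[OF dual_lin[OF that]] z_def by simp
        have yA: "y n \<in> A" for n using xA y_def by simp
        have pz: "pq_limited P p q (range z)"
        proof (rule pq_limited_dom[OF pl q1])
          show "range z \<noteq> {}" by simp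
          show "\<forall>f\<in>dual P. \<forall>b\<in>range z. ereal \<bar>f b\<bar> \<le> sup_on A f"
          proof (intro ballI)
            fix f b assume f: "f \<in> dual P" and b: "b \<in> range z"
            then obtain k where k: "b = z k" by blast
            have "\<bar>f b\<bar> \<le> (\<bar>f (y (fst (c k)))\<bar> + \<bar>f (y (snd (c k)))\<bar>) / 2"
              using fz[OF f, of k] k abs_triangle_ineq4[of "f (y (fst (c k)))" "f (y (snd (c k)))"] by simp
            then show "ereal \<bar>f b\<bar> \<le> sup_on A f" using ereal_avg supA yA by blast
          qed
        qed
        have wz: "weakly_null P z" unfolding weakly_null_def
        proof
          fix f assume f: "f \<in> dual P"
          have C: "Cauchy (\<lambda>n. f (y n))" using r(2) f y_def unfolding weakly_cauchy_def by blast
          show "(\<lambda>k. f (z k)) \<longlonglongrightarrow> 0"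
          proof (rule LIMSEQ_I)
            fix \<epsilon> :: real assume ep: "\<epsilon> > 0"
            obtain M where M: "\<forall>m\<ge>M. \<forall>n\<ge>M. dist (f (y m)) (f (y n)) < \<epsilon>"
              using C ep unfolding Cauchy_def by blast
            have "norm (f (z k) - 0) < \<epsilon>" if k: "k \<ge> M" for k
            proof -
              have "dist (f (y (fst (c k)))) (f (y (snd (c k)))) < \<epsilon>" using M c k by (meson order_trans)
              then show ?thesis using fz[OF f, of k] ep by (simp add: dist_real_def abs_divide)
            qed
            then show "\<exists>no. \<forall>n\<ge>no. norm (f (z n) - 0) < \<epsilon>" by blast
          qed
        qed
        have "lcs_null P z" using H wz pz by blast
        then have "(\<lambda>k. P i (z k)) \<longlonglongrightarrow> 0" unfolding lcs_null_def by blast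
        moreover have "e/2 > 0" using e by simp
        ultimately obtain n0 where "\<forall>n\<ge>n0. norm (P i (z n) - 0) < e/2" using LIMSEQ_D by blast
        then have lt: "\<bar>P i (z n0)\<bar> < e/2" by simp
        have "P i (z n0) = P i (y (fst (c n0)) - y (snd (c n0))) / 2"
          using sn_scale[OF sn[of i], of "1/2"] z_def by simp
        moreover have "e \<le> P i (y (fst (c n0)) - y (snd (c n0)))" using c by blast
        ultimately show False using lt by linarith
      qed
      then show "\<exists>r. strict_mono r \<and> lcs_cauchy P (x \<circ> r)" using r(1) by blast
    qed
  qed
qed

end
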